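(* Let $n,G$ be positive integers with $2^n$ dividing $G$, let $H=G/2^n$, and let $X=\{A\subseteq G: |A|=H\}$. For $\mathcal A\subseteq X$ define \[\|\mathcal A\|_2=\min\{|x| : x\subseteq G \text{ and } x\not\subseteq a \text{ for all } a\in\mathcal A\}.\] Let $k$ be a natural number and let $\mathcal A\subseteq X$ be non-empty with $\|\mathcal A\|_2\geq k+1$. Then \[\frac{|\mathcal A|}{|X|}\geq \frac{(G-H)!\,(H-k)!}{(G-k)!}.\]
   Context: Natural numbers are identified with the set of their predecessors, so $G=\{0,1,\ldots,G-1\}$ and $X$ is the family of all $H$-element subsets of $G$. *)

theory Defs
  imports Complex_Main
begin

text \<open>The ground set G is identified with {0..<G}; X is the family of all H-element subsets.\<close>
definition Xfam :: "nat \<Rightarrow> nat \<Rightarrow> nat set set" where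
  "Xfam G H = {A. A \<subseteq> {..<G} \<and> card A = H}"

definition norm2 :: "nat \<Rightarrow> nat set set \<Rightarrow> nat" where
  "norm2 G \<A> = (LEAST m. \<exists>x. x \<subseteq> {..<G} \<and> (\<forall>a\<in>\<A>. \<not> x \<subseteq> a) \<and> card x = m)"

end

theory Submission
  imports Defs
begin

theorem proposition4p6:
  fixes n G H k :: nat and \<A> :: "nat set set"
  assumes "n > 0" and "G > 0" and "2 ^ n dvd G"
    and "H = G div 2 ^ n"
    and "\<A> \<subseteq> Xfam G H" and "\<A> \<noteq> {}"
    and "norm2 G \<A> \<ge> k + 1"
  shows "real (card \<A>) / real (card (Xfam G H))
           \<ge> fact (G - H) * fact (H - k) / fact (G - k)"
proof -
  have n2: "(2::nat) ^ n \<ge> 2" using assms(1)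
    using power_increasing[of 1 n "2::nat"] by simp
  have HG: "H < G" using assms(2,4) n2
    using div_less_dividend[of "2^n" G] by simp
  have cov: "\<exists>a\<in>\<A>. x \<subseteq> a" if "x \<subseteq> {..<G}" "card x \<le> k" for x
  proof (rule ccontr)
    assume "\<not> ?thesis"
    hence "\<exists>y. y \<subseteq> {..<G} \<and> (\<forall>a\<in>\<A>. \<not> y \<subseteq> a) \<and> card y = card x"
      using that by blast
    hence "norm2 G \<A> \<le> card x" unfolding norm2_def by (rule Least_le)
    thus False using assms(7) that by linarith
  qed
  have AX: "\<And>a. a \<in> \<A> \<Longrightarrow> a \<subseteq> {..<G} \<and> card a = H" using assms(5) by (auto simp: Xfam_def)
  have kH: "k \<le> H"
  proof (rule ccontr)
    assume "\<not> k \<le> H"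
    have "H + 1 \<le> card {..<G}" using HG by simp
    then obtain x where x: "x \<subseteq> {..<G}" "card x = H + 1"
      by (meson obtain_subset_with_card_n)
    have "card x \<le> k" using x(2) \<open>\<not> k \<le> H\<close> by simp
    then obtain a where "a \<in> \<A>" "x \<subseteq> a" using cov x(1) by blast
    then have "card x \<le> card a" using AX[of a] by (meson card_mono finite_lessThan finite_subset)
    thus False using x AX \<open>a \<in> \<A>\<close> by simp
  qed
  have finA: "finite \<A>" using assms(5) unfolding Xfam_def
    by (rule finite_subset) (auto intro: finite_subset[of _ "Pow {..<G}"])
  have sub: "{x. x \<subseteq> {..<G} \<and> card x = k} \<subseteq> (\<Union>a\<in>\<A>. {x. x \<subseteq> a \<and> card x = k})"
    using cov by blast
  have "G choose k = card {x. x \<subseteq> {..<G} \<and> card x = k}"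
    using n_subsets[of "{..<G}" k] by simp
  also have "\<dots> \<le> card (\<Union>a\<in>\<A>. {x. x \<subseteq> a \<and> card x = k})"
  proof (rule card_mono[OF _ sub])
    show "finite (\<Union>a\<in>\<A>. {x. x \<subseteq> a \<and> card x = k})"
    proof (rule finite_UN_I[OF finA])
      fix a assume "a \<in> \<A>"
      hence "finite a" using AX by (meson finite_lessThan finite_subset)
      thus "finite {x. x \<subseteq> a \<and> card x = k}" by simp
    qed
  qed
  also have "\<dots> \<le> (\<Sum>a\<in>\<A>. card {x. x \<subseteq> a \<and> card x = k})"
    by (rule card_UN_le[OF finA])
  also have "\<dots> = (\<Sum>a\<in>\<A>. H choose k)"
    apply (rule sum.cong, simp)
    using AX n_subsets by (metis finite_lessThan finite_subset)
  also have "\<dots> = card \<A> * (H choose k)" by simp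
  finally have ineq: "real (G choose k) \<le> real (card \<A>) * real (H choose k)"
    by (metis of_nat_le_iff of_nat_mult)
  have cX: "card (Xfam G H) = G choose H"
    unfolding Xfam_def using n_subsets[of "{..<G}" H] by simp
  have kG: "k \<le> G" using kH HG by simp
  have b1: "real (G choose k) = fact G / (fact k * fact (G - k))" using binomial_fact[OF kG] by simp
  have b2: "real (H choose k) = fact H / (fact k * fact (H - k))" using binomial_fact[OF kH] by simp
  have b3: "real (G choose H) = fact G / (fact H * fact (G - H))" using binomial_fact[of H G] HG by simp
  have pos2: "real (H choose k) > 0" using kH by simp
  have pos3: "real (G choose H) > 0" using HG by simp
  have eq: "fact (G - H) * fact (H - k) / fact (G - k) = real (G choose k) / (real (H choose k) * real (G choose H))"
    unfolding b1 b2 b3 by (simp add: field_simps)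
  have "real (G choose k) / (real (H choose k) * real (G choose H)) \<le> real (card \<A>) / real (G choose H)"
    using ineq pos2 pos3 by (simp add: field_simps)
  thus ?thesis using eq cX by simp
qed

end
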